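(* For all finite multisets $\Gamma,\Delta$ of ${\sf Frm_2}$-formulas: $\Gamma\Rightarrow\Delta$ is derivable in ${\sf GWF_{N_2}}$ if and only if $\Gamma^\square\Rightarrow\Delta^\square$ is derivable in ${\sf G3M_{Nec}}$.
   Context: Language: countably many atoms $p,q,\dots$, the constant $\bot$, and binary connectives $\wedge,\vee,\rightarrow$ ($\rightarrow$ is strict implication). ${\sf Frm}$ is the set of formulas built from atoms and $\bot$ with $\wedge,\vee,\rightarrow$; $A,B,C,D$ range over ${\sf Frm}$. Let $\supset$ be a new binary symbol (material implication) and ${\sf Frm_1}={\sf Frm}\cup\{A\supset B : A,B\in{\sf Frm}\}$ (no nesting of $\supset$). ${\sf Frm_2}$ is the smallest set containing ${\sf Frm_1}$ and closed under $\wedge$ and $\vee$; $X,Y$ range over ${\sf Frm_2}$. A sequent is $\Gamma\Rightarrow\Delta$ with $\Gamma,\Delta$ finite multisets of ${\sf Frm_2}$-formulas. The calculus ${\sf GWF_{N_2}}$ has initial sequents $(id)$ $p,\Gamma\Rightarrow\Delta,p$ ($p$ an atom) and $(L_\bot)$ $\bot,\Gamma\Rightarrow\Delta$, and rules (premises / conclusion): $(L_\wedge)$ $X,Y,\Gamma\Rightarrow\Delta$ / $X\wedge Y,\Gamma\Rightarrow\Delta$; $(R_\wedge)$ $\Gamma\Rightarrow\Delta,X$ and $\Gamma\Rightarrow\Delta,Y$ / $\Gamma\Rightarrow\Delta,X\wedge Y$; $(L_\vee)$ $X,\Gamma\Rightarrow\Delta$ and $Y,\Gamma\Rightarrow\Delta$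 / $X\vee Y,\Gamma\Rightarrow\Delta$; $(R_\vee)$ $\Gamma\Rightarrow\Delta,X,Y$ / $\Gamma\Rightarrow\Delta,X\vee Y$; $(L_\supset)$ $\Gamma\Rightarrow\Delta,A$ and $B,\Gamma\Rightarrow\Delta$ / $A\supset B,\Gamma\Rightarrow\Delta$; $(R_\supset)$ $A,\Gamma\Rightarrow\Delta,B$ / $\Gamma\Rightarrow\Delta,A\supset B$; $(LR_\rightarrow)$ $C\supset D,A\Rightarrow B$ / $\Gamma,C\rightarrow D\Rightarrow\Delta,A\rightarrow B$; $(R_\rightarrow)$ $A\Rightarrow B$ / $\Gamma\Rightarrow\Delta,A\rightarrow B$. Here $A,B,C,D\in{\sf Frm}$, $X,Y\in{\sf Frm_2}$, and $\Gamma,\Delta$ are arbitrary finite multisets of ${\sf Frm_2}$-formulas. The modal language $\mathcal{L}_\square$ has atoms, $\bot$, binary $\wedge,\vee,\supset$ and unary $\square$. The sequent calculus ${\sf G3M_{Nec}}$ (sequents $\Gamma\Rightarrow\Delta$ of finite multisets of $\mathcal{L}_\square$-formulas; here $A,B$ are arbitrary $\mathcal{L}_\square$-formulas) has initial sequents $p,\Gamma\Rightarrow\Delta,p$ ($p$ an atom) and $\bot,\Gamma\Rightarrow\Delta$; rules: $A,B,\Gamma\Rightarrow\Delta$ / $A\wedge B,\Gamma\Rightarrow\Delta$; $\Gamma\Rightarrow\Delta,A$ and $\Gamma\Rightarrow\Delta,B$ / $\Gamma\Rightarrow\Delta,A\wedge B$; $A,\Gamma\Rightarrow\Delta$ and $B,\Gamma\Rightarrow\Delta$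 / $A\vee B,\Gamma\Rightarrow\Delta$; $\Gamma\Rightarrow\Delta,A,B$ / $\Gamma\Rightarrow\Delta,A\vee B$; $\Gamma\Rightarrow\Delta,A$ and $B,\Gamma\Rightarrow\Delta$ / $A\supset B,\Gamma\Rightarrow\Delta$; $A,\Gamma\Rightarrow\Delta,B$ / $\Gamma\Rightarrow\Delta,A\supset B$; $(LR_{M_\square})$ $A\Rightarrow B$ / $\square A,\Gamma\Rightarrow\Delta,\square B$; $(R_{N_\square})$ $\Rightarrow B$ / $\Gamma\Rightarrow\Delta,\square B$. The $\square$-translation from formulas built with $\wedge,\vee,\rightarrow,\supset,\bot$ into $\mathcal{L}_\square$ is: $p^\square=p$, $\bot^\square=\bot$, $(A\circ B)^\square=A^\square\circ B^\square$ for $\circ\in\{\wedge,\vee,\supset\}$, $(A\rightarrow B)^\square=\square(A^\square\supset B^\square)$; for a multiset $\Gamma$, $\Gamma^\square=\{A^\square : A\in\Gamma\}$ (as a multiset). *)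

theory Defs
  imports Main "HOL-Library.Multiset"
begin

text \<open>One formula type containing all connectives; Frm, Frm1, Frm2 are carved out by predicates.
 SImp = strict implication (arrow), MImp = material implication (supset).\<close>
datatype fml = At nat | Bot | Conj fml fml | Disj fml fml | SImp fml fml | MImp fml fml

fun isFrm :: "fml \<Rightarrow> bool" where
  "isFrm (At p) = True"
| "isFrm Bot = True"
| "isFrm (Conj A B) = (isFrm A \<and> isFrm B)"
| "isFrm (Disj A B) = (isFrm A \<and> isFrm B)"
| "isFrm (SImp A B) = (isFrm A \<and> isFrm B)"
| "isFrm (MImp A B) = False"

definition isFrm1 :: "fml \<Rightarrow> bool" where
  "isFrm1 X \<longleftrightarrow> isFrm X \<or> (\<exists>A B. isFrm A \<and> isFrm B \<and> X = MImp A B)"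

inductive isFrm2 :: "fml \<Rightarrow> bool" where
  base: "isFrm1 X \<Longrightarrow> isFrm2 X"
| conj: "isFrm2 X \<Longrightarrow> isFrm2 Y \<Longrightarrow> isFrm2 (Conj X Y)"
| disj: "isFrm2 X \<Longrightarrow> isFrm2 Y \<Longrightarrow> isFrm2 (Disj X Y)"

definition wfms :: "fml multiset \<Rightarrow> bool" where
  "wfms \<Gamma> \<longleftrightarrow> (\<forall>X\<in>#\<Gamma>. isFrm2 X)"

inductive gwf :: "fml multiset \<Rightarrow> fml multiset \<Rightarrow> bool" where
  idA: "wfms \<Gamma> \<Longrightarrow> wfms \<Delta> \<Longrightarrow> gwf (add_mset (At p) \<Gamma>) (add_mset (At p) \<Delta>)"
| LBot: "wfms \<Gamma> \<Longrightarrow> wfms \<Delta> \<Longrightarrow> gwf (add_mset Bot \<Gamma>) \<Delta>"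
| LConj: "isFrm2 X \<Longrightarrow> isFrm2 Y \<Longrightarrow> gwf (add_mset X (add_mset Y \<Gamma>)) \<Delta>
          \<Longrightarrow> gwf (add_mset (Conj X Y) \<Gamma>) \<Delta>"
| RConj: "isFrm2 X \<Longrightarrow> isFrm2 Y \<Longrightarrow> gwf \<Gamma> (add_mset X \<Delta>) \<Longrightarrow> gwf \<Gamma> (add_mset Y \<Delta>)
          \<Longrightarrow> gwf \<Gamma> (add_mset (Conj X Y) \<Delta>)"
| LDisj: "isFrm2 X \<Longrightarrow> isFrm2 Y \<Longrightarrow> gwf (add_mset X \<Gamma>) \<Delta> \<Longrightarrow> gwf (add_mset Y \<Gamma>) \<Delta>
          \<Longrightarrow> gwf (add_mset (Disj X Y) \<Gamma>) \<Delta>"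
| RDisj: "isFrm2 X \<Longrightarrow> isFrm2 Y \<Longrightarrow> gwf \<Gamma> (add_mset X (add_mset Y \<Delta>))
          \<Longrightarrow> gwf \<Gamma> (add_mset (Disj X Y) \<Delta>)"
| LMImp: "isFrm A \<Longrightarrow> isFrm B \<Longrightarrow> gwf \<Gamma> (add_mset A \<Delta>) \<Longrightarrow> gwf (add_mset B \<Gamma>) \<Delta>
          \<Longrightarrow> gwf (add_mset (MImp A B) \<Gamma>) \<Delta>"
| RMImp: "isFrm A \<Longrightarrow> isFrm B \<Longrightarrow> gwf (add_mset A \<Gamma>) (add_mset B \<Delta>)
          \<Longrightarrow> gwf \<Gamma> (add_mset (MImp A B) \<Delta>)"
| LRSImp: "isFrm A \<Longrightarrow> isFrm B \<Longrightarrow> isFrm C \<Longrightarrow> isFrm D \<Longrightarrow> wfms \<Gamma> \<Longrightarrow> wfms \<Delta>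
          \<Longrightarrow> gwf {#MImp C D, A#} {#B#}
          \<Longrightarrow> gwf (add_mset (SImp C D) \<Gamma>) (add_mset (SImp A B) \<Delta>)"
| RSImp: "isFrm A \<Longrightarrow> isFrm B \<Longrightarrow> wfms \<Gamma> \<Longrightarrow> wfms \<Delta>
          \<Longrightarrow> gwf {#A#} {#B#}
          \<Longrightarrow> gwf \<Gamma> (add_mset (SImp A B) \<Delta>)"

datatype mfml = MAt nat | MBot | MConj mfml mfml | MDisj mfml mfml | MImpl mfml mfml | Box mfml

inductive g3m :: "mfml multiset \<Rightarrow> mfml multiset \<Rightarrow> bool" where
  idA: "g3m (add_mset (MAt p) \<Gamma>) (add_mset (MAt p) \<Delta>)"
| LBot: "g3m (add_mset MBot \<Gamma>) \<Delta>"
| LConj: "g3m (add_mset A (add_mset B \<Gamma>)) \<Delta> \<Longrightarrow> g3m (add_mset (MConj A B) \<Gamma>) \<Delta>"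
| RConj: "g3m \<Gamma> (add_mset A \<Delta>) \<Longrightarrow> g3m \<Gamma> (add_mset B \<Delta>) \<Longrightarrow> g3m \<Gamma> (add_mset (MConj A B) \<Delta>)"
| LDisj: "g3m (add_mset A \<Gamma>) \<Delta> \<Longrightarrow> g3m (add_mset B \<Gamma>) \<Delta> \<Longrightarrow> g3m (add_mset (MDisj A B) \<Gamma>) \<Delta>"
| RDisj: "g3m \<Gamma> (add_mset A (add_mset B \<Delta>)) \<Longrightarrow> g3m \<Gamma> (add_mset (MDisj A B) \<Delta>)"
| LImp: "g3m \<Gamma> (add_mset A \<Delta>) \<Longrightarrow> g3m (add_mset B \<Gamma>) \<Delta> \<Longrightarrow> g3m (add_mset (MImpl A B) \<Gamma>) \<Delta>"
| RImp: "g3m (add_mset A \<Gamma>) (add_mset B \<Delta>) \<Longrightarrow> g3m \<Gamma> (add_mset (MImpl A B) \<Delta>)"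
| LRM: "g3m {#A#} {#B#} \<Longrightarrow> g3m (add_mset (Box A) \<Gamma>) (add_mset (Box B) \<Delta>)"
| RN: "g3m {#} {#B#} \<Longrightarrow> g3m \<Gamma> (add_mset (Box B) \<Delta>)"

fun boxtr :: "fml \<Rightarrow> mfml" where
  "boxtr (At p) = MAt p"
| "boxtr Bot = MBot"
| "boxtr (Conj A B) = MConj (boxtr A) (boxtr B)"
| "boxtr (Disj A B) = MDisj (boxtr A) (boxtr B)"
| "boxtr (MImp A B) = MImpl (boxtr A) (boxtr B)"
| "boxtr (SImp A B) = Box (MImpl (boxtr A) (boxtr B))"

end

theory Submission
  imports Defs
begin

lemma isFrm_2: "isFrm A \<Longrightarrow> isFrm2 A"
  by (rule isFrm2.base) (simp add: isFrm1_def)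

lemma isFrm2_Conj: "isFrm2 (Conj X Y) \<Longrightarrow> isFrm2 X \<and> isFrm2 Y"
  by (erule isFrm2.cases) (auto simp: isFrm1_def isFrm_2)

lemma isFrm2_Disj: "isFrm2 (Disj X Y) \<Longrightarrow> isFrm2 X \<and> isFrm2 Y"
  by (erule isFrm2.cases) (auto simp: isFrm1_def isFrm_2)

lemma isFrm2_MImp: "isFrm2 (MImp X Y) \<Longrightarrow> isFrm X \<and> isFrm Y"
  by (erule isFrm2.cases) (auto simp: isFrm1_def)

lemma isFrm2_SImp: "isFrm2 (SImp X Y) \<Longrightarrow> isFrm X \<and> isFrm Y"
  by (erule isFrm2.cases) (auto simp: isFrm1_def)

lemma isFrm2_MImpI: "isFrm X \<Longrightarrow> isFrm Y \<Longrightarrow> isFrm2 (MImp X Y)"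
  by (rule isFrm2.base) (auto simp: isFrm1_def)

lemma wfms_add[simp]: "wfms (add_mset x M) \<longleftrightarrow> isFrm2 x \<and> wfms M"
  by (auto simp: wfms_def)

lemma wfms_empty[simp]: "wfms {#}"
  by (auto simp: wfms_def)

lemma gwf_inv_RMImp:
  "gwf G D \<Longrightarrow> D = add_mset (MImp A B) D0 \<Longrightarrow> isFrm A \<Longrightarrow> isFrm B
   \<Longrightarrow> gwf (add_mset A G) (add_mset B D0)"
proof (induction arbitrary: D0 rule: gwf.induct)
  case (idA \<Gamma> \<Delta> p)
  then obtain K where K: "\<Delta> = add_mset (MImp A B) K" "D0 = add_mset (At p) K"
    by (auto simp: add_eq_conv_ex)
  have "gwf (add_mset (At p) (add_mset A \<Gamma>)) (add_mset (At p) (add_mset B K))"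
    using idA K by (intro gwf.idA) (auto simp: isFrm_2)
  then show ?case using K by (simp add: add_mset_commute)
next
  case (LBot \<Gamma> \<Delta>)
  then have "gwf (add_mset Bot (add_mset A \<Gamma>)) (add_mset B D0)"
    by (intro gwf.LBot) (auto simp: isFrm_2 wfms_def)
  then show ?case by (simp add: add_mset_commute)
next
  case (LConj X Y \<Gamma> \<Delta>)
  then have "gwf (add_mset (Conj X Y) (add_mset A \<Gamma>)) (add_mset B D0)"
    by (intro gwf.LConj) (auto simp: add_mset_commute)
  then show ?case by (simp add: add_mset_commute)
next
  case (RConj X Y \<Gamma> \<Delta>)
  then obtain K where K: "\<Delta> = add_mset (MImp A B) K" "D0 = add_mset (Conj X Y) K"
    by (auto simp: add_eq_conv_ex)
  have "gwf (add_mset A \<Gamma>) (add_mset (Conj X Y) (add_mset B K))"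
    using RConj K by (intro gwf.RConj) (auto simp: add_mset_commute)
  then show ?case using K by (simp add: add_mset_commute)
next
  case (LDisj X Y \<Gamma> \<Delta>)
  then have "gwf (add_mset (Disj X Y) (add_mset A \<Gamma>)) (add_mset B D0)"
    by (intro gwf.LDisj) (auto simp: add_mset_commute)
  then show ?case by (simp add: add_mset_commute)
next
  case (RDisj X Y \<Gamma> \<Delta>)
  then obtain K where K: "\<Delta> = add_mset (MImp A B) K" "D0 = add_mset (Disj X Y) K"
    by (auto simp: add_eq_conv_ex)
  have "gwf (add_mset A \<Gamma>) (add_mset (Disj X Y) (add_mset B K))"
    using RDisj K by (intro gwf.RDisj) (auto simp: add_mset_commute)
  then show ?case using K by (simp add: add_mset_commute)
next
  case (LMImp A' B' \<Gamma> \<Delta>)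
  then have "gwf (add_mset (MImp A' B') (add_mset A \<Gamma>)) (add_mset B D0)"
    by (intro gwf.LMImp) (auto simp: add_mset_commute)
  then show ?case by (simp add: add_mset_commute)
next
  case (RMImp A' B' \<Gamma> \<Delta>)
  show ?case
  proof (cases "A' = A \<and> B' = B \<and> \<Delta> = D0")
    case True
    then show ?thesis using RMImp by simp
  next
    case False
    then obtain K where K: "\<Delta> = add_mset (MImp A B) K" "D0 = add_mset (MImp A' B') K"
      using RMImp.prems by (auto simp: add_eq_conv_ex)
    have "gwf (add_mset A \<Gamma>) (add_mset (MImp A' B') (add_mset B K))"
      using RMImp K by (intro gwf.RMImp) (auto simp: add_mset_commute)
    then show ?thesis using K by (simp add: add_mset_commute)
  qed
next
  case (LRSImp A' B' C D \<Gamma> \<Delta>)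
  then obtain K where K: "\<Delta> = add_mset (MImp A B) K" "D0 = add_mset (SImp A' B') K"
    by (auto simp: add_eq_conv_ex)
  have "gwf (add_mset (SImp C D) (add_mset A \<Gamma>)) (add_mset (SImp A' B') (add_mset B K))"
    using LRSImp K by (intro gwf.LRSImp) (auto simp: isFrm_2)
  then show ?case using K by (simp add: add_mset_commute)
next
  case (RSImp A' B' \<Gamma> \<Delta>)
  then obtain K where K: "\<Delta> = add_mset (MImp A B) K" "D0 = add_mset (SImp A' B') K"
    by (auto simp: add_eq_conv_ex)
  have "gwf (add_mset A \<Gamma>) (add_mset (SImp A' B') (add_mset B K))"
    using RSImp K by (intro gwf.RSImp) (auto simp: isFrm_2)
  then show ?case using K by (simp add: add_mset_commute)
qed

lemma fwd_dir: "gwf G D \<Longrightarrow> g3m (image_mset boxtr G) (image_mset boxtr D)"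
proof (induction rule: gwf.induct)
  case (LRSImp A B C D \<Gamma> \<Delta>)
  have "g3m {#MImpl (boxtr C) (boxtr D)#} {#MImpl (boxtr A) (boxtr B)#}"
    using LRSImp.IH by (intro g3m.RImp) (simp add: add_mset_commute)
  then show ?case by (simp add: g3m.LRM)
next
  case (RSImp A B \<Gamma> \<Delta>)
  have "g3m {#} {#MImpl (boxtr A) (boxtr B)#}"
    using RSImp.IH by (intro g3m.RImp) simp
  then show ?case by (simp add: g3m.RN)
qed (auto intro: g3m.intros)

lemma boxtr_inv[simp]:
  "boxtr X = MAt p \<longleftrightarrow> X = At p"
  "boxtr X = MBot \<longleftrightarrow> X = Bot"
  "boxtr X = MConj a b \<longleftrightarrow> (\<exists>X1 X2. X = Conj X1 X2 \<and> boxtr X1 = a \<and> boxtr X2 = b)"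
  "boxtr X = MDisj a b \<longleftrightarrow> (\<exists>X1 X2. X = Disj X1 X2 \<and> boxtr X1 = a \<and> boxtr X2 = b)"
  "boxtr X = MImpl a b \<longleftrightarrow> (\<exists>X1 X2. X = MImp X1 X2 \<and> boxtr X1 = a \<and> boxtr X2 = b)"
  "boxtr X = Box c \<longleftrightarrow> (\<exists>X1 X2. X = SImp X1 X2 \<and> c = MImpl (boxtr X1) (boxtr X2))"
  by (cases X; auto)+

lemma image_mset_add:
  assumes "add_mset a M = image_mset f N"
  obtains x N' where "N = add_mset x N'" "f x = a" "M = image_mset f N'"
proof -
  have "a \<in># image_mset f N" using assms by (metis union_single_eq_member)
  then obtain x where x: "x \<in># N" "f x = a" by auto
  then have N: "N = add_mset x (N - {#x#})" by simp
  then have "image_mset f N = add_mset a (image_mset f (N - {#x#}))"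
    using x by (metis image_mset_add_mset)
  then have "M = image_mset f (N - {#x#})" using assms by simp
  then show ?thesis using that N x by blast
qed

lemma bwd_dir:
  "g3m G D \<Longrightarrow> \<forall>\<Gamma> \<Delta>. G = image_mset boxtr \<Gamma> \<longrightarrow> D = image_mset boxtr \<Delta>
     \<longrightarrow> wfms \<Gamma> \<longrightarrow> wfms \<Delta> \<longrightarrow> gwf \<Gamma> \<Delta>"
proof (induction rule: g3m.induct)
  case (idA p G D)
  show ?case
  proof (intro allI impI)
    fix \<Gamma> \<Delta> assume h: "add_mset (MAt p) G = image_mset boxtr \<Gamma>"
      "add_mset (MAt p) D = image_mset boxtr \<Delta>" "wfms \<Gamma>" "wfms \<Delta>"
    obtain x N where "\<Gamma> = add_mset x N" "boxtr x = MAt p" using h(1) by (rule image_mset_add)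
    moreover obtain y K where "\<Delta> = add_mset y K" "boxtr y = MAt p" using h(2) by (rule image_mset_add)
    ultimately show "gwf \<Gamma> \<Delta>" using h(3,4) by (simp add: gwf.idA)
  qed
next
  case (LBot G D)
  show ?case
  proof (intro allI impI)
    fix \<Gamma> \<Delta> assume h: "add_mset MBot G = image_mset boxtr \<Gamma>"
      "D = image_mset boxtr \<Delta>" "wfms \<Gamma>" "wfms \<Delta>"
    obtain x N where "\<Gamma> = add_mset x N" "boxtr x = MBot" using h(1) by (rule image_mset_add)
    then show "gwf \<Gamma> \<Delta>" using h(3,4) by (simp add: gwf.LBot)
  qed
next
  case (LConj a b G D)
  show ?case
  proof (intro allI impI)
    fix \<Gamma> \<Delta> assume h: "add_mset (MConj a b) G = image_mset boxtr \<Gamma>"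
      "D = image_mset boxtr \<Delta>" "wfms \<Gamma>" "wfms \<Delta>"
    obtain x N where x: "\<Gamma> = add_mset x N" "boxtr x = MConj a b" "G = image_mset boxtr N"
      using h(1) by (rule image_mset_add)
    from x(2) obtain X1 X2 where X: "x = Conj X1 X2" "boxtr X1 = a" "boxtr X2 = b" by auto
    have c: "isFrm2 (Conj X1 X2)" "wfms N" using h(3) unfolding x(1) X(1) by simp_all
    have f: "isFrm2 X1" "isFrm2 X2" using isFrm2_Conj[OF c(1)] by auto
    have "gwf (add_mset X1 (add_mset X2 N)) \<Delta>"
      apply (rule LConj.IH[rule_format])
      using h(2,4) x(3) X(2,3) f c(2) by simp_all
    then show "gwf \<Gamma> \<Delta>" unfolding x(1) X(1) using f by (intro gwf.LConj)
  qed
next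
  case (RConj G a D b)
  show ?case
  proof (intro allI impI)
    fix \<Gamma> \<Delta> assume h: "G = image_mset boxtr \<Gamma>"
      "add_mset (MConj a b) D = image_mset boxtr \<Delta>" "wfms \<Gamma>" "wfms \<Delta>"
    obtain x N where x: "\<Delta> = add_mset x N" "boxtr x = MConj a b" "D = image_mset boxtr N"
      using h(2) by (rule image_mset_add)
    from x(2) obtain X1 X2 where X: "x = Conj X1 X2" "boxtr X1 = a" "boxtr X2 = b" by auto
    have c: "isFrm2 (Conj X1 X2)" "wfms N" using h(4) unfolding x(1) X(1) by simp_all
    have f: "isFrm2 X1" "isFrm2 X2" using isFrm2_Conj[OF c(1)] by auto
    have 1: "gwf \<Gamma> (add_mset X1 N)"
      apply (rule RConj.IH(1)[rule_format])
      using h(1,3) x(3) X(2,3) f c(2) by simp_all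
    have 2: "gwf \<Gamma> (add_mset X2 N)"
      apply (rule RConj.IH(2)[rule_format])
      using h(1,3) x(3) X(2,3) f c(2) by simp_all
    show "gwf \<Gamma> \<Delta>" unfolding x(1) X(1) using f 1 2 by (intro gwf.RConj)
  qed
next
  case (LDisj a G D b)
  show ?case
  proof (intro allI impI)
    fix \<Gamma> \<Delta> assume h: "add_mset (MDisj a b) G = image_mset boxtr \<Gamma>"
      "D = image_mset boxtr \<Delta>" "wfms \<Gamma>" "wfms \<Delta>"
    obtain x N where x: "\<Gamma> = add_mset x N" "boxtr x = MDisj a b" "G = image_mset boxtr N"
      using h(1) by (rule image_mset_add)
    from x(2) obtain X1 X2 where X: "x = Disj X1 X2" "boxtr X1 = a" "boxtr X2 = b" by auto
    have c: "isFrm2 (Disj X1 X2)" "wfms N" using h(3) unfolding x(1) X(1) by simp_all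
    have f: "isFrm2 X1" "isFrm2 X2" using isFrm2_Disj[OF c(1)] by auto
    have 1: "gwf (add_mset X1 N) \<Delta>"
      apply (rule LDisj.IH(1)[rule_format])
      using h(2,4) x(3) X(2,3) f c(2) by simp_all
    have 2: "gwf (add_mset X2 N) \<Delta>"
      apply (rule LDisj.IH(2)[rule_format])
      using h(2,4) x(3) X(2,3) f c(2) by simp_all
    show "gwf \<Gamma> \<Delta>" unfolding x(1) X(1) using f 1 2 by (intro gwf.LDisj)
  qed
next
  case (RDisj G a b D)
  show ?case
  proof (intro allI impI)
    fix \<Gamma> \<Delta> assume h: "G = image_mset boxtr \<Gamma>"
      "add_mset (MDisj a b) D = image_mset boxtr \<Delta>" "wfms \<Gamma>" "wfms \<Delta>"
    obtain x N where x: "\<Delta> = add_mset x N" "boxtr x = MDisj a b" "D = image_mset boxtr N"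
      using h(2) by (rule image_mset_add)
    from x(2) obtain X1 X2 where X: "x = Disj X1 X2" "boxtr X1 = a" "boxtr X2 = b" by auto
    have c: "isFrm2 (Disj X1 X2)" "wfms N" using h(4) unfolding x(1) X(1) by simp_all
    have f: "isFrm2 X1" "isFrm2 X2" using isFrm2_Disj[OF c(1)] by auto
    have 1: "gwf \<Gamma> (add_mset X1 (add_mset X2 N))"
      apply (rule RDisj.IH[rule_format])
      using h(1,3) x(3) X(2,3) f c(2) by simp_all
    show "gwf \<Gamma> \<Delta>" unfolding x(1) X(1) using f 1 by (intro gwf.RDisj)
  qed
next
  case (LImp G a D b)
  show ?case
  proof (intro allI impI)
    fix \<Gamma> \<Delta> assume h: "add_mset (MImpl a b) G = image_mset boxtr \<Gamma>"
      "D = image_mset boxtr \<Delta>" "wfms \<Gamma>" "wfms \<Delta>"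
    obtain x N where x: "\<Gamma> = add_mset x N" "boxtr x = MImpl a b" "G = image_mset boxtr N"
      using h(1) by (rule image_mset_add)
    from x(2) obtain X1 X2 where X: "x = MImp X1 X2" "boxtr X1 = a" "boxtr X2 = b" by auto
    have c: "isFrm2 (MImp X1 X2)" "wfms N" using h(3) unfolding x(1) X(1) by simp_all
    have f: "isFrm X1" "isFrm X2" using isFrm2_MImp[OF c(1)] by auto
    have 1: "gwf N (add_mset X1 \<Delta>)"
      apply (rule LImp.IH(1)[rule_format])
      using h(2,4) x(3) X(2,3) f c(2) by (simp_all add: isFrm_2)
    have 2: "gwf (add_mset X2 N) \<Delta>"
      apply (rule LImp.IH(2)[rule_format])
      using h(2,4) x(3) X(2,3) f c(2) by (simp_all add: isFrm_2)
    show "gwf \<Gamma> \<Delta>" unfolding x(1) X(1) using f 1 2 by (intro gwf.LMImp)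
  qed
next
  case (RImp a G b D)
  show ?case
  proof (intro allI impI)
    fix \<Gamma> \<Delta> assume h: "G = image_mset boxtr \<Gamma>"
      "add_mset (MImpl a b) D = image_mset boxtr \<Delta>" "wfms \<Gamma>" "wfms \<Delta>"
    obtain x N where x: "\<Delta> = add_mset x N" "boxtr x = MImpl a b" "D = image_mset boxtr N"
      using h(2) by (rule image_mset_add)
    from x(2) obtain X1 X2 where X: "x = MImp X1 X2" "boxtr X1 = a" "boxtr X2 = b" by auto
    have c: "isFrm2 (MImp X1 X2)" "wfms N" using h(4) unfolding x(1) X(1) by simp_all
    have f: "isFrm X1" "isFrm X2" using isFrm2_MImp[OF c(1)] by auto
    have 1: "gwf (add_mset X1 \<Gamma>) (add_mset X2 N)"
      apply (rule RImp.IH[rule_format])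
      using h(1,3) x(3) X(2,3) f c(2) by (simp_all add: isFrm_2)
    show "gwf \<Gamma> \<Delta>" unfolding x(1) X(1) using f 1 by (intro gwf.RMImp)
  qed
next
  case (LRM a b G D)
  show ?case
  proof (intro allI impI)
    fix \<Gamma> \<Delta> assume h: "add_mset (Box a) G = image_mset boxtr \<Gamma>"
      "add_mset (Box b) D = image_mset boxtr \<Delta>" "wfms \<Gamma>" "wfms \<Delta>"
    obtain x N where x: "\<Gamma> = add_mset x N" "boxtr x = Box a" "G = image_mset boxtr N"
      using h(1) by (rule image_mset_add)
    from x(2) obtain C E where X: "x = SImp C E" "a = MImpl (boxtr C) (boxtr E)" by auto
    obtain y K where y: "\<Delta> = add_mset y K" "boxtr y = Box b" "D = image_mset boxtr K"
      using h(2) by (rule image_mset_add)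
    from y(2) obtain A B where Y: "y = SImp A B" "b = MImpl (boxtr A) (boxtr B)" by auto
    have c: "isFrm2 (SImp C E)" "wfms N" using h(3) unfolding x(1) X(1) by simp_all
    have d: "isFrm2 (SImp A B)" "wfms K" using h(4) unfolding y(1) Y(1) by simp_all
    have f: "isFrm C" "isFrm E" using isFrm2_SImp[OF c(1)] by auto
    have g: "isFrm A" "isFrm B" using isFrm2_SImp[OF d(1)] by auto
    have "gwf {#MImp C E#} {#MImp A B#}"
      apply (rule LRM.IH[rule_format])
      using X(2) Y(2) f g by (simp_all add: isFrm2_MImpI)
    then have "gwf (add_mset A {#MImp C E#}) {#B#}"
      using gwf_inv_RMImp[of "{#MImp C E#}" "{#MImp A B#}" A B "{#}"] g by simp
    then have 1: "gwf {#MImp C E, A#} {#B#}" by (simp add: add_mset_commute)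
    show "gwf \<Gamma> \<Delta>" unfolding x(1) X(1) y(1) Y(1)
      using f g c(2) d(2) 1 by (intro gwf.LRSImp)
  qed
next
  case (RN b G D)
  show ?case
  proof (intro allI impI)
    fix \<Gamma> \<Delta> assume h: "G = image_mset boxtr \<Gamma>"
      "add_mset (Box b) D = image_mset boxtr \<Delta>" "wfms \<Gamma>" "wfms \<Delta>"
    obtain y K where y: "\<Delta> = add_mset y K" "boxtr y = Box b" "D = image_mset boxtr K"
      using h(2) by (rule image_mset_add)
    from y(2) obtain A B where Y: "y = SImp A B" "b = MImpl (boxtr A) (boxtr B)" by auto
    have d: "isFrm2 (SImp A B)" "wfms K" using h(4) unfolding y(1) Y(1) by simp_all
    have g: "isFrm A" "isFrm B" using isFrm2_SImp[OF d(1)] by auto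
    have "gwf {#} {#MImp A B#}"
      apply (rule RN.IH[rule_format])
      using Y(2) g by (simp_all add: isFrm2_MImpI)
    then have 1: "gwf {#A#} {#B#}"
      using gwf_inv_RMImp[of "{#}" "{#MImp A B#}" A B "{#}"] g by simp
    show "gwf \<Gamma> \<Delta>" unfolding y(1) Y(1)
      using g h(3) d(2) 1 by (intro gwf.RSImp)
  qed
qed

theorem theorem4p1:
  fixes \<Gamma> \<Delta> :: "fml multiset"
  assumes "\<forall>X\<in>#\<Gamma>. isFrm2 X" and "\<forall>X\<in>#\<Delta>. isFrm2 X"
  shows "gwf \<Gamma> \<Delta> \<longleftrightarrow> g3m (image_mset boxtr \<Gamma>) (image_mset boxtr \<Delta>)"
proof
  assume "gwf \<Gamma> \<Delta>"
  then show "g3m (image_mset boxtr \<Gamma>) (image_mset boxtr \<Delta>)" by (rule fwd_dir)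
next
  assume "g3m (image_mset boxtr \<Gamma>) (image_mset boxtr \<Delta>)"
  moreover have "wfms \<Gamma>" "wfms \<Delta>" using assms unfolding wfms_def by auto
  ultimately show "gwf \<Gamma> \<Delta>" using bwd_dir by blast
qed

end
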